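(* Let $G$ be a group and $\mathcal{S}$ a 2-complex with vertices in $G$ such that $\mathcal{C}=Sc[\mathcal{S},G]$ is a commutative triplet structure. Then every edge of $\mathcal{C}$ has exactly two centers.
   Context: $\mathcal{S}(1)$ is the set of 2-sets contained in triangles of $\mathcal{S}$. For $\sigma\subseteq G$, $\sigma\cdot g=\{sg:s\in\sigma\}$; $Sc[\mathcal{S},G]=\{\sigma\cdot g:\sigma\in\mathcal{S},g\in G\}$. $\mathcal{T}=\mathcal{S}(1)$, $\mathcal{T}_o$ = ordered pairs $(t_1,t_2)$ with $\{t_1,t_2\}\in\mathcal{T}$. Commutative triplet structure: (0) $\{s,s^{-1}\}\notin\mathcal{T}$ for every vertex $s$; (A) every edge of $\mathcal{T}$ lies in exactly $\tilde d$ triangles of $\mathcal{S}$; (B) $ab=ba$ for $\{a,b\}\in\mathcal{T}$; (C) $\{a,b\}\in\mathcal{T}\iff\{a^{-1},b^{-1}\}\in\mathcal{T}$; (D) for $t\ne t'\in\mathcal{T}_o$, $t_1t_2^{-1}=t'_1(t'_2)^{-1}$ implies $t'_2=t_1^{-1}$, $t'_1=t_2^{-1}$; (E) the 1-skeleton of $\mathcal{S}$ is connected. For $\tau=\{a,b\}\in\mathcal{T}$ let $E(g,\tau)=\{ag,bg\}$. The edges of $\mathcal{C}$ are the sets $E(g,\tau)$; an element $c\in G$ is a center of an edge $w$ of $\mathcal{C}$ if $w=E(c,\tau)$ for some $\tau\in\mathcal{T}$. *)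

theory Defs
  imports "HOL-Algebra.Group"
begin

text \<open>A 2-complex with vertices in the group G is represented by its set S of
triangles (3-element subsets of the carrier of G).\<close>

definition two_complex_in :: "('a, 'b) monoid_scheme \<Rightarrow> 'a set set \<Rightarrow> bool" where
  "two_complex_in G S \<longleftrightarrow> (\<forall>\<sigma>\<in>S. \<sigma> \<subseteq> carrier G \<and> card \<sigma> = 3)"

definition cx_vertices :: "'a set set \<Rightarrow> 'a set" where
  "cx_vertices S = \<Union>S"

definition cx_edges :: "'a set set \<Rightarrow> 'a set set" where
  "cx_edges S = {e. card e = 2 \<and> (\<exists>\<sigma>\<in>S. e \<subseteq> \<sigma>)}"

definition rtrans :: "('a, 'b) monoid_scheme \<Rightarrow> 'a set \<Rightarrow> 'a \<Rightarrow> 'a set" where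
  "rtrans G \<sigma> g = (\<lambda>s. s \<otimes>\<^bsub>G\<^esub> g) ` \<sigma>"

definition Sc :: "('a, 'b) monoid_scheme \<Rightarrow> 'a set set \<Rightarrow> 'a set set" where
  "Sc G S = {rtrans G \<sigma> g | \<sigma> g. \<sigma> \<in> S \<and> g \<in> carrier G}"

definition ordered_edges :: "'a set set \<Rightarrow> ('a \<times> 'a) set" where
  "ordered_edges S = {(t1, t2). {t1, t2} \<in> cx_edges S}"

definition comm_triplet_structure :: "('a, 'b) monoid_scheme \<Rightarrow> 'a set set \<Rightarrow> bool" where
  "comm_triplet_structure G S \<longleftrightarrow>
     \<comment> \<open>(0)\<close>
     (\<forall>s\<in>cx_vertices S. {s, inv\<^bsub>G\<^esub> s} \<notin> cx_edges S) \<and>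
     \<comment> \<open>(A)\<close>
     (\<exists>d::nat. \<forall>e\<in>cx_edges S. finite {\<sigma>\<in>S. e \<subseteq> \<sigma>} \<and> card {\<sigma>\<in>S. e \<subseteq> \<sigma>} = d) \<and>
     \<comment> \<open>(B)\<close>
     (\<forall>a b. {a, b} \<in> cx_edges S \<longrightarrow> a \<otimes>\<^bsub>G\<^esub> b = b \<otimes>\<^bsub>G\<^esub> a) \<and>
     \<comment> \<open>(C)\<close>
     (\<forall>a\<in>carrier G. \<forall>b\<in>carrier G.
        {a, b} \<in> cx_edges S \<longleftrightarrow> {inv\<^bsub>G\<^esub> a, inv\<^bsub>G\<^esub> b} \<in> cx_edges S) \<and>
     \<comment> \<open>(D)\<close>
     (\<forall>t\<in>ordered_edges S. \<forall>t'\<in>ordered_edges S.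
        t \<noteq> t' \<and> fst t \<otimes>\<^bsub>G\<^esub> inv\<^bsub>G\<^esub> (snd t) = fst t' \<otimes>\<^bsub>G\<^esub> inv\<^bsub>G\<^esub> (snd t')
        \<longrightarrow> snd t' = inv\<^bsub>G\<^esub> (fst t) \<and> fst t' = inv\<^bsub>G\<^esub> (snd t)) \<and>
     \<comment> \<open>(E) the 1-skeleton is connected\<close>
     (\<forall>u\<in>cx_vertices S. \<forall>v\<in>cx_vertices S.
        (u, v) \<in> (ordered_edges S)\<^sup>*)"

definition edgeE :: "('a, 'b) monoid_scheme \<Rightarrow> 'a \<Rightarrow> 'a set \<Rightarrow> 'a set" where
  "edgeE G g \<tau> = rtrans G \<tau> g"

definition C_edges :: "('a, 'b) monoid_scheme \<Rightarrow> 'a set set \<Rightarrow> 'a set set" where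
  "C_edges G S = {edgeE G g \<tau> | g \<tau>. g \<in> carrier G \<and> \<tau> \<in> cx_edges S}"

definition centers :: "('a, 'b) monoid_scheme \<Rightarrow> 'a set set \<Rightarrow> 'a set \<Rightarrow> 'a set" where
  "centers G S w = {c \<in> carrier G. \<exists>\<tau>\<in>cx_edges S. w = edgeE G c \<tau>}"

end

theory Submission
  imports Defs
begin
lemma grp_aux1:
  fixes G (structure)
  assumes "group G" "x \<in> carrier G" "y \<in> carrier G" "z \<in> carrier G"
  shows "(x \<otimes>\<^bsub>G\<^esub> z) \<otimes>\<^bsub>G\<^esub> inv\<^bsub>G\<^esub> (y \<otimes>\<^bsub>G\<^esub> z) = x \<otimes>\<^bsub>G\<^esub> inv\<^bsub>G\<^esub> y"
proof -
  interpret group G by fact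
  have "z \<otimes> (inv z \<otimes> inv y) = (z \<otimes> inv z) \<otimes> inv y" by (rule m_assoc[symmetric]) (simp_all add: assms)
  also have "\<dots> = inv y" using assms by simp
  finally have "z \<otimes> (inv z \<otimes> inv y) = inv y" .
  then show ?thesis using assms by (simp add: inv_mult_group m_assoc)
qed

lemma grp_aux2:
  fixes G (structure)
  assumes "group G" "b \<in> carrier G" "c \<in> carrier G" "x \<in> carrier G"
    and "inv\<^bsub>G\<^esub> b \<otimes>\<^bsub>G\<^esub> c = x"
  shows "c = b \<otimes>\<^bsub>G\<^esub> x"
proof -
  interpret group G by fact
  have "b \<otimes> x = b \<otimes> (inv b \<otimes> c)" using assms by simp
  also have "\<dots> = (b \<otimes> inv b) \<otimes> c" by (rule m_assoc[symmetric]) (simp_all add: assms)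
  also have "\<dots> = c" using assms by simp
  finally show ?thesis by simp
qed
lemma key_case:
  fixes G (structure)
  assumes grp: "group G" and ct: "comm_triplet_structure G S"
    and ab: "(a, b) \<in> ordered_edges S" and pq: "(p, q) \<in> ordered_edges S"
    and car: "a \<in> carrier G" "b \<in> carrier G" "p \<in> carrier G" "q \<in> carrier G"
      "g \<in> carrier G" "c \<in> carrier G"
    and e1: "p \<otimes> c = a \<otimes> g" and e2: "q \<otimes> c = b \<otimes> g"
  shows "c = g \<or> c = b \<otimes> a \<otimes> g"
proof -
  interpret group G by fact
  have D: "\<forall>t\<in>ordered_edges S. \<forall>t'\<in>ordered_edges S.
        t \<noteq> t' \<and> fst t \<otimes> inv (snd t) = fst t' \<otimes> inv (snd t')
        \<longrightarrow> snd t' = inv (fst t) \<and> fst t' = inv (snd t)"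
    using ct unfolding comm_triplet_structure_def by blast
  have "p \<otimes> inv q = (p \<otimes> c) \<otimes> inv (q \<otimes> c)"
    using grp_aux1[OF grp, of p q c] car by simp
  also have "\<dots> = a \<otimes> inv b" using e1 e2 grp_aux1[OF grp, of a b g] car by simp
  finally have eq: "a \<otimes> inv b = p \<otimes> inv q" by simp
  show ?thesis
  proof (cases "(a, b) = (p, q)")
    case True
    then have "a \<otimes> c = a \<otimes> g" using e1 by simp
    then show ?thesis using car by simp
  next
    case False
    then have "q = inv a \<and> p = inv b" using D ab pq eq by fastforce
    then have "inv b \<otimes> c = a \<otimes> g" using e1 by simp
    then have "c = b \<otimes> (a \<otimes> g)" using grp_aux2[OF grp, of b c "a \<otimes> g"] car by simp
    then show ?thesis using car by (simp add: m_assoc)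
  qed
qed

lemma main_aux:
  fixes G (structure)
  assumes "group G"
    and "two_complex_in G S"
    and "comm_triplet_structure G S"
    and "w \<in> C_edges G S"
  shows "card (centers G S w) = 2"
proof -
  interpret group G by fact
  note grp = assms(1) and cx = assms(2) and ct = assms(3)
  have edge_car: "x \<in> carrier G \<and> y \<in> carrier G \<and> x \<noteq> y" if h: "{x, y} \<in> cx_edges S" for x y
  proof -
    from h obtain \<sigma> where "\<sigma> \<in> S" "{x,y} \<subseteq> \<sigma>" "card {x, y} = 2" unfolding cx_edges_def by auto
    moreover have "\<sigma> \<subseteq> carrier G" using cx \<open>\<sigma> \<in> S\<close> unfolding two_complex_in_def by auto
    ultimately show ?thesis by (auto simp: card_insert_if split: if_splits)
  qed
  have edge_vert: "x \<in> cx_vertices S" if "{x, y} \<in> cx_edges S" for x y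
    using that unfolding cx_edges_def cx_vertices_def by auto
  have edge2: "\<exists>x y. \<tau> = {x, y}" if "\<tau> \<in> cx_edges S" for \<tau>
    using that unfolding cx_edges_def by (auto simp: card_2_iff)
  obtain g \<tau> where g: "g \<in> carrier G" and tau: "\<tau> \<in> cx_edges S" and w: "w = edgeE G g \<tau>"
    using assms(4) unfolding C_edges_def by auto
  obtain a b where tab: "\<tau> = {a, b}" using edge2[OF tau] by auto
  have abE: "{a, b} \<in> cx_edges S" using tau tab by simp
  have car: "a \<in> carrier G" "b \<in> carrier G" "a \<noteq> b" using edge_car[OF abE] by auto
  have w2: "w = {a \<otimes> g, b \<otimes> g}" using w tab unfolding edgeE_def rtrans_def by auto
  have comm: "a \<otimes> b = b \<otimes> a" using ct abE unfolding comm_triplet_structure_def by blast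
  have "{inv a, inv b} \<in> cx_edges S"
    using ct abE car unfolding comm_triplet_structure_def by blast
  then have invE: "{inv b, inv a} \<in> cx_edges S" by (simp add: insert_commute)
  have abO: "(a, b) \<in> ordered_edges S" using abE unfolding ordered_edges_def by simp
  define h where "h = b \<otimes> a \<otimes> g"
  have hcar: "h \<in> carrier G" using car g h_def by simp
  have sub1: "centers G S w \<subseteq> {g, h}"
  proof
    fix c assume "c \<in> centers G S w"
    then obtain \<tau>' where c: "c \<in> carrier G" and t': "\<tau>' \<in> cx_edges S" and wc: "w = edgeE G c \<tau>'"
      unfolding centers_def by auto
    obtain p q where tpq: "\<tau>' = {p, q}" using edge2[OF t'] by auto
    have pqE: "{p, q} \<in> cx_edges S" using t' tpq by simp
    have pcar: "p \<in> carrier G" "q \<in> carrier G" using edge_car[OF pqE] by auto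
    have "{a \<otimes> g, b \<otimes> g} = {p \<otimes> c, q \<otimes> c}"
      using w2 wc tpq unfolding edgeE_def rtrans_def by auto
    then have "(p \<otimes> c = a \<otimes> g \<and> q \<otimes> c = b \<otimes> g) \<or> (q \<otimes> c = a \<otimes> g \<and> p \<otimes> c = b \<otimes> g)"
      by (auto simp: doubleton_eq_iff)
    moreover have "(p, q) \<in> ordered_edges S" "(q, p) \<in> ordered_edges S"
      using pqE unfolding ordered_edges_def by (auto simp: insert_commute)
    ultimately have "c = g \<or> c = b \<otimes> a \<otimes> g"
      using key_case[OF grp ct abO, of p q g c] key_case[OF grp ct abO, of q p g c]
        car pcar g c by blast
    then show "c \<in> {g, h}" using h_def by auto
  qed
  have gin: "g \<in> centers G S w" using g abE w tab unfolding centers_def by auto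
  have e1: "inv b \<otimes> h = a \<otimes> g" using car g unfolding h_def
    by (simp add: inv_solve_left' m_assoc)
  have "h = a \<otimes> b \<otimes> g" using comm h_def by simp
  then have e2: "inv a \<otimes> h = b \<otimes> g" using car g
    by (simp add: inv_solve_left' m_assoc)
  have "edgeE G h {inv b, inv a} = {inv b \<otimes> h, inv a \<otimes> h}"
    unfolding edgeE_def rtrans_def by auto
  then have "w = edgeE G h {inv b, inv a}" using w2 e1 e2 by auto
  then have hin: "h \<in> centers G S w" using hcar invE unfolding centers_def by auto
  have "g \<noteq> h"
  proof
    assume "g = h"
    then have "g = (b \<otimes> a) \<otimes> g" using h_def by simp
    then have "b \<otimes> a = \<one>" using car g by simp
    then have "inv a = b" using car by (simp add: inv_equality)
    then have "{a, inv a} \<in> cx_edges S" using abE by simp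
    moreover have "a \<in> cx_vertices S" using edge_vert[OF abE] .
    ultimately show False using ct unfolding comm_triplet_structure_def by blast
  qed
  have "centers G S w = {g, h}" using sub1 gin hin by auto
  then show ?thesis using \<open>g \<noteq> h\<close> by simp
qed
theorem mainTheorem6:
  fixes G :: "('a, 'b) monoid_scheme" and S :: "'a set set"
  assumes "group G"
    and "two_complex_in G S"
    and "comm_triplet_structure G S"
    and "w \<in> C_edges G S"
  shows "card (centers G S w) = 2"
  using assms by (rule main_aux)

end
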